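(* Let $A\in\mathbb{C}\setminus\{0\}$, let $\sqrt{A}$ denote either square root of $A$, and let $|q|<1$. Define $G(A;q):=\sum_{n\geq0}\frac{q^{n^2+2n}(A;q^2)_n}{(q^2;q^2)_n}$. Then $$G(A;q)=\frac1{2\sqrt{A}} (-q;q^2)_{\infty}\left[(-\sqrt{A};-q)_{\infty}- (\sqrt{A};-q)_{\infty}\right].$$
   Context: The $q$-Pochhammer symbol: $(a;q)_0=1$, $(a;q)_n=\prod_{j=0}^{n-1}(1-aq^j)$ for $n\ge1$, and $(a;q)_\infty=\prod_{j\ge0}(1-aq^j)$. *)

theory Defs
  imports "HOL-Analysis.Analysis"
begin

definition qpoch :: "complex \<Rightarrow> complex \<Rightarrow> nat \<Rightarrow> complex" where
  "qpoch a q n = (\<Prod>j<n. 1 - a * q ^ j)"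

definition qpoch_inf :: "complex \<Rightarrow> complex \<Rightarrow> complex" where
  "qpoch_inf a q = (\<Prod>j. 1 - a * q ^ j)"

definition G :: "complex \<Rightarrow> complex \<Rightarrow> complex" where
  "G A q = (\<Sum>n. q ^ (n\<^sup>2 + 2 * n) * qpoch A (q\<^sup>2) n / qpoch (q\<^sup>2) (q\<^sup>2) n)"

end

theory Submission
  imports Defs
begin


lemma ratio_summ:
  fixes f :: "nat \<Rightarrow> complex"
  assumes le: "\<And>n. norm (f (Suc n)) \<le> C * r^n * norm (f n)" and r: "0 \<le> r" "r < 1"
  shows "summable (\<lambda>n. norm (f n))"
proof -
  have "(\<lambda>n. C * r^n) \<longlonglongrightarrow> 0"
    using r by (intro tendsto_mult_right_zero LIMSEQ_power_zero) auto
  then have "eventually (\<lambda>n. C * r^n < 1/2) sequentially"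
    by (rule order_tendstoD) auto
  then obtain N where N: "\<And>n. n \<ge> N \<Longrightarrow> C * r^n < 1/2"
    by (auto simp: eventually_at_top_linorder)
  show ?thesis
  proof (rule summable_ratio_test[of "1/2" N])
    fix n assume "n \<ge> N"
    have "norm (norm (f (Suc n))) \<le> C * r^n * norm (f n)" using le by simp
    also have "\<dots> \<le> 1/2 * norm (f n)"
      using N[OF \<open>n \<ge> N\<close>] by (intro mult_right_mono) auto
    finally show "norm (norm (f (Suc n))) \<le> 1/2 * norm (norm (f n))" by simp
  qed auto
qed

lemma qpoch_0 [simp]: "qpoch a q 0 = 1" by (simp add: qpoch_def)
lemma qpoch_Suc: "qpoch a q (Suc n) = qpoch a q n * (1 - a * q ^ n)"
  by (simp add: qpoch_def lessThan_Suc mult.commute)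

lemma norm_1_minus_pow:
  fixes Q :: complex assumes "norm Q < 1"
  shows "norm (1 - Q ^ Suc n) \<ge> 1 - norm Q"
proof -
  have "norm (Q ^ Suc n) = norm Q * norm Q ^ n" by (simp add: norm_power norm_mult)
  also have "\<dots> \<le> norm Q"
    using assms by (intro mult_left_le power_le_one) auto
  finally have "norm (Q ^ Suc n) \<le> norm Q" .
  moreover have "1 - norm (Q ^ Suc n) \<le> norm (1 - Q ^ Suc n)"
    using norm_triangle_ineq3[of 1 "Q ^ Suc n"] by simp
  ultimately show ?thesis by linarith
qed

lemma qpoch_QQ_nz:
  fixes Q :: complex assumes "norm Q < 1"
  shows "qpoch Q Q n \<noteq> 0"
proof -
  have "1 - Q * Q ^ j \<noteq> 0" for j
    using norm_1_minus_pow[OF assms, of j] assms by auto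
  then show ?thesis by (simp add: qpoch_def)
qed

lemma qpoch_shift_nz:
  fixes Q z :: complex assumes "norm Q < 1" "norm z < 1"
  shows "qpoch z Q n \<noteq> 0"
proof -
  have "1 - z * Q ^ j \<noteq> 0" for j
  proof
    assume "1 - z * Q ^ j = 0"
    then have "norm (z * Q^j) = 1" by (metis eq_iff_diff_eq_0 norm_one)
    moreover have "norm (z * Q^j) = norm z * norm Q ^ j" by (simp add: norm_mult norm_power)
    moreover have "norm z * norm Q ^ j \<le> norm z"
      using assms by (intro mult_left_le power_le_one) auto
    ultimately show False using assms by simp
  qed
  then show ?thesis by (simp add: qpoch_def)
qed

lemma choose2_Suc: "Suc n choose 2 = (n choose 2) + n"
  by (simp add: numeral_2_eq_2 add.commute)

lemma choose2_twice: "2 * (m choose 2) + m = m * m"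
  by (induction m) (simp_all add: choose2_Suc algebra_simps)



definition ec :: "complex \<Rightarrow> nat \<Rightarrow> complex" where
  "ec Q n = Q ^ (n choose 2) / qpoch Q Q n"

definition eS :: "complex \<Rightarrow> complex \<Rightarrow> complex" where
  "eS Q w = (\<Sum>n. ec Q n * w ^ n)"

lemma ec_Suc:
  assumes "norm Q < 1"
  shows "ec Q (Suc n) = ec Q n * (Q ^ n / (1 - Q * Q ^ n))"
proof -
  have "1 - Q * Q ^ n \<noteq> 0"
    using norm_1_minus_pow[OF assms, of n] assms by auto
  then show ?thesis
    by (simp add: ec_def qpoch_Suc choose2_Suc power_add)
qed

lemma ec_summable:
  assumes Q: "norm Q < 1"
  shows "summable (\<lambda>n. norm (ec Q n * w ^ n))"
proof (rule ratio_summ[where C = "norm w / (1 - norm Q)" and r = "norm Q"])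
  fix n
  have nz: "1 - Q * Q ^ n \<noteq> 0"
    using norm_1_minus_pow[OF Q, of n] Q by auto
  have eq: "ec Q (Suc n) * w ^ Suc n = (ec Q n * w ^ n) * (Q ^ n * w / (1 - Q * Q ^ n))"
    using ec_Suc[OF Q, of n] by (simp add: field_simps)
  have "norm (Q ^ n * w / (1 - Q * Q ^ n)) = norm Q ^ n * norm w / norm (1 - Q ^ Suc n)"
    by (simp add: norm_mult norm_divide norm_power)
  also have "\<dots> \<le> norm Q ^ n * norm w / (1 - norm Q)"
  proof -
    have "0 < 1 - norm Q" using Q by simp
    moreover have "1 - norm Q \<le> norm (1 - Q ^ Suc n)" by (rule norm_1_minus_pow[OF Q])
    ultimately show ?thesis by (intro divide_left_mono) (auto intro!: mult_pos_pos)
  qed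
  also have "\<dots> = norm w / (1 - norm Q) * norm Q ^ n" by simp
  finally have le: "norm (Q ^ n * w / (1 - Q * Q ^ n)) \<le> norm w / (1 - norm Q) * norm Q ^ n" .
  show "norm (ec Q (Suc n) * w ^ Suc n) \<le> norm w / (1 - norm Q) * norm Q ^ n * norm (ec Q n * w ^ n)"
  proof -
    have "norm (ec Q (Suc n) * w ^ Suc n) = norm (ec Q n * w ^ n) * norm (Q ^ n * w / (1 - Q * Q ^ n))"
      by (simp only: eq norm_mult)
    also have "\<dots> \<le> norm (ec Q n * w ^ n) * (norm w / (1 - norm Q) * norm Q ^ n)"
      by (rule mult_left_mono[OF le norm_ge_zero])
    also have "\<dots> = norm w / (1 - norm Q) * norm Q ^ n * norm (ec Q n * w ^ n)"
      by (rule mult.commute)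
    finally show ?thesis .
  qed
qed (use Q in auto)

lemma eS_funeq:
  assumes Q: "norm Q < 1"
  shows "eS Q z = (1 + z) * eS Q (z * Q)"
proof -
  define a where "a = (\<lambda>n. ec Q n * z ^ n)"
  define b where "b = (\<lambda>n. ec Q n * (z * Q) ^ n)"
  have sa: "summable a" unfolding a_def by (rule summable_norm_cancel[OF ec_summable[OF Q]])
  have sb: "summable b" unfolding b_def by (rule summable_norm_cancel[OF ec_summable[OF Q]])
  define d where "d = (\<lambda>n. a n - b n)"
  have sd: "summable d" unfolding d_def using sa sb by (rule summable_diff)
  have d0: "d 0 = 0" by (simp add: d_def a_def b_def)
  have dS: "d (Suc m) = z * b m" for m
  proof -
    have nz: "1 - Q * Q ^ m \<noteq> 0"
      using norm_1_minus_pow[OF Q, of m] Q by auto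
    have e1: "ec Q (Suc m) * (1 - Q * Q ^ m) = ec Q m * Q ^ m"
      using nz by (simp add: ec_Suc[OF Q])
    have "d (Suc m) = ec Q (Suc m) * z ^ Suc m * (1 - Q * Q ^ m)"
      by (simp add: d_def a_def b_def power_mult_distrib algebra_simps)
    also have "\<dots> = (ec Q (Suc m) * (1 - Q * Q ^ m)) * z ^ Suc m"
      by (simp only: ac_simps)
    also have "\<dots> = z * b m"
      unfolding e1 b_def by (simp add: power_mult_distrib algebra_simps)
    finally show ?thesis .
  qed
  have "suminf d = (\<Sum>n. d (Suc n)) + d 0"
    using suminf_split_head[OF sd] by simp
  also have "\<dots> = z * suminf b" using d0 dS suminf_mult[OF sb] by simp
  finally have "suminf a - suminf b = z * suminf b"
    unfolding d_def using suminf_diff[OF sa sb] by simp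
  then show ?thesis
    unfolding eS_def a_def[symmetric] b_def[symmetric] by (simp add: algebra_simps)
qed

lemma eS_iter:
  assumes Q: "norm Q < 1"
  shows "eS Q z = qpoch (- z) Q N * eS Q (z * Q ^ N)"
proof (induction N)
  case 0 then show ?case by simp
next
  case (Suc N)
  have "eS Q (z * Q ^ N) = (1 + z * Q ^ N) * eS Q (z * Q ^ N * Q)"
    by (rule eS_funeq[OF Q])
  then show ?case using Suc by (simp add: qpoch_Suc mult.assoc mult.commute mult.left_commute)
qed

lemma eS_prod:
  assumes Q: "norm Q < 1"
  shows "eS Q z = qpoch_inf (- z) Q"
proof -
  define f where "f = (\<lambda>j. 1 - (- z) * Q ^ j)"
  have "summable (\<lambda>j. norm (f j - 1))"
  proof -
    have "summable (\<lambda>j. norm z * norm Q ^ j)"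
      using Q by (intro summable_mult summable_geometric) auto
    then show ?thesis by (simp add: f_def norm_mult norm_power)
  qed
  then have "convergent_prod f"
    using summable_imp_abs_convergent_prod abs_convergent_prod_imp_convergent_prod by blast
  then have "(\<lambda>n. \<Prod>i\<le>n. f i) \<longlonglongrightarrow> prodinf f" by (rule convergent_prod_LIMSEQ)
  then have "(\<lambda>n. \<Prod>i<Suc n. f i) \<longlonglongrightarrow> prodinf f" by (simp add: lessThan_Suc_atMost)
  then have p: "(\<lambda>n. qpoch (- z) Q n) \<longlonglongrightarrow> qpoch_inf (- z) Q"
    unfolding qpoch_def qpoch_inf_def f_def by (rule LIMSEQ_imp_Suc)
  have "isCont (\<lambda>x. \<Sum>n. ec Q n * x ^ n) 0"
    by (rule isCont_powser[where K = 1])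
       (use summable_norm_cancel[OF ec_summable[OF Q, of 1]] in auto)
  moreover have "(\<lambda>N. z * Q ^ N) \<longlonglongrightarrow> 0"
    using Q by (intro tendsto_mult_right_zero LIMSEQ_power_zero) auto
  ultimately have "(\<lambda>N. eS Q (z * Q ^ N)) \<longlonglongrightarrow> eS Q 0"
    unfolding eS_def by (rule isCont_tendsto_compose)
  moreover have "eS Q 0 = 1" unfolding eS_def powser_zero by (simp add: ec_def binomial_eq_0)
  ultimately have "(\<lambda>N. qpoch (- z) Q N * eS Q (z * Q ^ N)) \<longlonglongrightarrow> qpoch_inf (- z) Q * 1"
    using p by (intro tendsto_mult) auto
  then have "(\<lambda>N. eS Q z) \<longlonglongrightarrow> qpoch_inf (- z) Q"
    using eS_iter[OF Q, of z] by simp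
  then show ?thesis by (rule LIMSEQ_unique[OF tendsto_const])
qed



fun qb :: "complex \<Rightarrow> nat \<Rightarrow> nat \<Rightarrow> complex" where
  "qb Q n 0 = 1"
| "qb Q 0 (Suc k) = 0"
| "qb Q (Suc n) (Suc k) = qb Q n (Suc k) + Q ^ (n - k) * qb Q n k"

lemma qb_zero: "n < k \<Longrightarrow> qb Q n k = 0"
proof (induction n arbitrary: k)
  case 0 then show ?case by (cases k) auto
next
  case (Suc n) then show ?case by (cases k) auto
qed

lemma qbin_thm: "qpoch x Q n = (\<Sum>k\<le>n. qb Q n k * ((- x) ^ k * Q ^ (k choose 2)))"
proof (induction n)
  case 0 then show ?case by (simp add: binomial_eq_0)
next
  case (Suc n)
  define f where "f = (\<lambda>k. (- x) ^ k * Q ^ (k choose 2))"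
  have IH: "qpoch x Q n = (\<Sum>k\<le>n. qb Q n k * f k)" using Suc unfolding f_def .
  have A1: "f 0 + (\<Sum>j\<le>n. qb Q n (Suc j) * f (Suc j)) = (\<Sum>k\<le>n. qb Q n k * f k)"
  proof -
    have "f 0 + (\<Sum>j\<le>n. qb Q n (Suc j) * f (Suc j)) = (\<Sum>k\<le>Suc n. qb Q n k * f k)"
      by (subst sum.atMost_Suc_shift) simp
    also have "\<dots> = (\<Sum>k\<le>n. qb Q n k * f k)" by (simp add: qb_zero)
    finally show ?thesis .
  qed
  have A2: "(\<Sum>j\<le>n. Q ^ (n - j) * qb Q n j * f (Suc j)) = (- x) * Q ^ n * (\<Sum>k\<le>n. qb Q n k * f k)"
    unfolding sum_distrib_left
  proof (rule sum.cong)
    fix j assume "j \<in> {..n}"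
    then have "Q ^ (n - j) * Q ^ j = Q ^ n" by (simp flip: power_add)
    then show "Q ^ (n - j) * qb Q n j * f (Suc j) = (- x) * Q ^ n * (qb Q n j * f j)"
      unfolding f_def choose2_Suc power_add
      by (metis (no_types, lifting) mult.assoc mult.commute mult.left_commute power_Suc)
  qed simp
  have "(\<Sum>k\<le>Suc n. qb Q (Suc n) k * f k)
      = f 0 + (\<Sum>j\<le>n. qb Q (Suc n) (Suc j) * f (Suc j))"
    by (subst sum.atMost_Suc_shift) simp
  also have "\<dots> = f 0 + (\<Sum>j\<le>n. qb Q n (Suc j) * f (Suc j)) + (\<Sum>j\<le>n. Q ^ (n - j) * qb Q n j * f (Suc j))"
    by (simp add: distrib_right sum.distrib)
  also have "\<dots> = qpoch x Q n * (1 - x * Q ^ n)"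
    unfolding A1 A2 IH by (simp add: algebra_simps)
  finally show ?case unfolding f_def by (simp add: qpoch_Suc)
qed

lemma qb_fact: "k \<le> n \<Longrightarrow> qb Q n k * qpoch Q Q k * qpoch Q Q (n - k) = qpoch Q Q n"
proof (induction n arbitrary: k)
  case 0 then show ?case by simp
next
  case (Suc n)
  show ?case
  proof (cases k)
    case 0 then show ?thesis by simp
  next
    case (Suc j)
    with Suc.prems have jn: "j \<le> n" by simp
    define D where "D = qpoch Q Q"
    have t2: "qb Q n j * D (Suc j) * D (n - j) = (1 - Q * Q ^ j) * D n"
      using Suc.IH[OF jn] unfolding D_def by (simp add: qpoch_Suc algebra_simps)
    have t1: "qb Q n (Suc j) * D (Suc j) * D (n - j) = (1 - Q ^ (n - j)) * D n"
    proof (cases "j = n")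
      case True then show ?thesis by (simp add: qb_zero)
    next
      case False
      then have jn': "Suc j \<le> n" using jn by simp
      then have "n - j = Suc (n - Suc j)" by simp
      then have e: "D (n - j) = D (n - Suc j) * (1 - Q ^ (n - j))"
        unfolding D_def by (simp add: qpoch_Suc)
      have "qb Q n (Suc j) * D (Suc j) * D (n - j)
          = qb Q n (Suc j) * D (Suc j) * (D (n - Suc j) * (1 - Q ^ (n - j)))"
        by (simp only: e)
      also have "\<dots> = (qb Q n (Suc j) * D (Suc j) * D (n - Suc j)) * (1 - Q ^ (n - j))"
        by (simp only: mult.assoc)
      also have "\<dots> = D n * (1 - Q ^ (n - j))"
        using Suc.IH[OF jn'] unfolding D_def by simp
      finally show ?thesis by simp
    qed
    have pw: "Q ^ (n - j) * (Q * Q ^ j) = Q * Q ^ n"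
      using jn by (simp add: mult.left_commute flip: power_add)
    have "qb Q (Suc n) k * D k * D (Suc n - k)
        = qb Q n (Suc j) * D (Suc j) * D (n - j) + Q ^ (n - j) * (qb Q n j * D (Suc j) * D (n - j))"
      using Suc by (simp add: algebra_simps)
    also have "\<dots> = D n - (Q ^ (n - j) * (Q * Q ^ j)) * D n"
      unfolding t1 t2 by (simp add: algebra_simps)
    also have "\<dots> = D n * (1 - Q * Q ^ n)"
      unfolding pw by (simp add: algebra_simps)
    finally show ?thesis unfolding D_def by (simp add: qpoch_Suc)
  qed
qed

lemma qbin_norm:
  assumes Q: "norm Q < 1"
  shows "qpoch x Q n / qpoch Q Q n
       = (\<Sum>k\<le>n. (- x) ^ k * Q ^ (k choose 2) / (qpoch Q Q k * qpoch Q Q (n - k)))"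
proof -
  have "qpoch x Q n / qpoch Q Q n = (\<Sum>k\<le>n. qb Q n k * ((- x) ^ k * Q ^ (k choose 2)) / qpoch Q Q n)"
    by (simp add: qbin_thm sum_divide_distrib)
  also have "\<dots> = (\<Sum>k\<le>n. (- x) ^ k * Q ^ (k choose 2) / (qpoch Q Q k * qpoch Q Q (n - k)))"
  proof (rule sum.cong)
    fix k assume "k \<in> {..n}"
    then have "qb Q n k * qpoch Q Q k * qpoch Q Q (n - k) = qpoch Q Q n" by (intro qb_fact) auto
    moreover have "qpoch Q Q k \<noteq> 0" "qpoch Q Q (n - k) \<noteq> 0" "qpoch Q Q n \<noteq> 0"
      using qpoch_QQ_nz[OF Q] by auto
    ultimately show "qb Q n k * ((- x) ^ k * Q ^ (k choose 2)) / qpoch Q Q n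
        = (- x) ^ k * Q ^ (k choose 2) / (qpoch Q Q k * qpoch Q Q (n - k))"
      by (auto simp: field_simps)
  qed simp
  finally show ?thesis .
qed



lemma exp1: "(k + m)\<^sup>2 + 2 * (k + m) = (k\<^sup>2 + 2 * k) + 2 * (m choose 2) + (2 * k + 3) * m"
proof -
  have e: "2 * (m choose 2) + m = m * m" by (rule choose2_twice)
  show ?thesis using e unfolding power2_eq_square by (simp add: algebra_simps)
qed

lemma exp2: "k\<^sup>2 + 2 * k = 2 * (k choose 2) + 3 * k"
proof -
  have e: "2 * (k choose 2) + k = k * k" by (rule choose2_twice)
  show ?thesis using e unfolding power2_eq_square by (simp add: algebra_simps)
qed

lemma exp3: "(2 * k + 1) choose 2 = 2 * (k * k) + k"
proof -
  have e: "2 * ((2 * k + 1) choose 2) + (2 * k + 1) = (2 * k + 1) * (2 * k + 1)" by (rule choose2_twice)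
  show ?thesis using e by (simp add: algebra_simps)
qed

lemma exp4: "2 * (k choose 2) + (k\<^sup>2 + 2 * k) = 2 * (k * k) + k"
proof -
  have e: "2 * (k choose 2) + k = k * k" by (rule choose2_twice)
  show ?thesis using e unfolding power2_eq_square by (simp add: algebra_simps)
qed


lemma negpow_even:
  fixes q :: complex
  shows "(- q) ^ (2 * j) = (q\<^sup>2) ^ j"
  by (simp add: power_mult)

lemma pw_t:
  fixes q :: complex
  shows "(- q) ^ ((2 * k + 1) choose 2) = (- 1) ^ k * q ^ (2 * (k * k) + k)"
proof -
  have "(- q) ^ ((2 * k + 1) choose 2) = (- q) ^ (2 * (k * k)) * (- q) ^ k"
    by (simp only: exp3 power_add)
  also have "\<dots> = (q\<^sup>2) ^ (k * k) * ((- 1) ^ k * q ^ k)"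
    by (simp only: negpow_even power_minus[of q k])
  also have "\<dots> = (- 1) ^ k * ((q\<^sup>2) ^ (k * k) * q ^ k)"
    by (simp only: mult_ac)
  also have "(q\<^sup>2) ^ (k * k) * q ^ k = q ^ (2 * (k * k) + k)"
    by (simp only: power_mult[symmetric] power_add[symmetric])
  finally show ?thesis .
qed

lemma pw_u:
  fixes q :: complex
  shows "(q\<^sup>2) ^ (k choose 2) * q ^ (k\<^sup>2 + 2 * k) = q ^ (2 * (k * k) + k)"
  by (simp only: exp4 power_mult[symmetric] power_add[symmetric])

lemma pw_T:
  fixes q :: complex
  shows "q ^ ((k + m)\<^sup>2 + 2 * (k + m)) = q ^ (k\<^sup>2 + 2 * k) * ((q\<^sup>2) ^ (m choose 2) * (q ^ (2 * k + 3)) ^ m)"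
  by (simp only: exp1 power_mult[symmetric] power_add[symmetric] add.assoc)

lemma pw_X:
  fixes q :: complex
  shows "q ^ (k\<^sup>2 + 2 * k) = (q\<^sup>2) ^ (k choose 2) * (q ^ 3) ^ k"
  by (simp only: exp2 power_mult[symmetric] power_add[symmetric])


lemma qpoch_odd:
  fixes q :: complex
  shows "qpoch (- q) (- q) (2 * k + 1) = qpoch (q\<^sup>2) (q\<^sup>2) k * qpoch (- q) (q\<^sup>2) (Suc k)"
proof (induction k)
  case 0 then show ?case by (simp add: qpoch_Suc)
next
  case (Suc k)
  have e1: "(- q) * (- q) ^ (2 * k + 1) = q\<^sup>2 * (q\<^sup>2) ^ k"
  proof -
    have "(- q) * (- q) ^ (2 * k + 1) = (- q) ^ (2 * Suc k)" by simp
    also have "\<dots> = (q\<^sup>2) ^ Suc k" by (rule negpow_even)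
    finally show ?thesis by simp
  qed
  have e2: "(- q) ^ Suc (2 * k + 1) = (q\<^sup>2) ^ Suc k"
  proof -
    have "(- q) ^ Suc (2 * k + 1) = (- q) ^ (2 * Suc k)" by simp
    also have "\<dots> = (q\<^sup>2) ^ Suc k" by (rule negpow_even)
    finally show ?thesis .
  qed
  have i: "2 * Suc k + 1 = Suc (Suc (2 * k + 1))" by simp
  have "qpoch (- q) (- q) (2 * Suc k + 1) = qpoch (- q) (- q) (2 * k + 1) * (1 - (- q) * (- q) ^ (2 * k + 1))
        * (1 - (- q) * (- q) ^ Suc (2 * k + 1))"
    by (simp only: i qpoch_Suc)
  also have "\<dots> = qpoch (- q) (- q) (2 * k + 1) * (1 - q\<^sup>2 * (q\<^sup>2) ^ k) * (1 - (- q) * (q\<^sup>2) ^ Suc k)"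
    by (simp only: e1 e2)
  also have "\<dots> = qpoch (q\<^sup>2) (q\<^sup>2) k * qpoch (- q) (q\<^sup>2) (Suc k) * (1 - q\<^sup>2 * (q\<^sup>2) ^ k) * (1 - (- q) * (q\<^sup>2) ^ Suc k)"
    by (simp only: Suc.IH)
  also have "\<dots> = qpoch (q\<^sup>2) (q\<^sup>2) (Suc k) * qpoch (- q) (q\<^sup>2) (Suc (Suc k))"
    by (simp only: qpoch_Suc[of "q\<^sup>2" "q\<^sup>2" k] qpoch_Suc[of "- q" "q\<^sup>2" "Suc k"] mult_ac)
  finally show ?case .
qed



definition X :: "complex \<Rightarrow> complex \<Rightarrow> nat \<Rightarrow> complex" where
  "X A q k = (- A) ^ k * (q\<^sup>2) ^ (k choose 2) * q ^ (k\<^sup>2 + 2 * k) / qpoch (q\<^sup>2) (q\<^sup>2) k"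

definition T :: "complex \<Rightarrow> complex \<Rightarrow> nat \<times> nat \<Rightarrow> complex" where
  "T A q km = X A q (fst km) * (ec (q\<^sup>2) (snd km) * (q ^ (2 * fst km + 3)) ^ snd km)"

definition u :: "complex \<Rightarrow> complex \<Rightarrow> nat \<Rightarrow> complex" where
  "u A q k = X A q k / qpoch (- q) (q\<^sup>2) (Suc k)"

lemma normQ: "norm (q::complex) < 1 \<Longrightarrow> norm (q\<^sup>2) < 1"
  by (simp add: norm_power power_less_one_iff)

lemma diag:
  assumes q: "norm q < 1"
  shows "q ^ (n\<^sup>2 + 2 * n) * qpoch A (q\<^sup>2) n / qpoch (q\<^sup>2) (q\<^sup>2) n = (\<Sum>k\<le>n. T A q (k, n - k))"
proof -
  have Q: "norm (q\<^sup>2) < 1" using normQ[OF q] .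
  have "q ^ (n\<^sup>2 + 2 * n) * qpoch A (q\<^sup>2) n / qpoch (q\<^sup>2) (q\<^sup>2) n
      = q ^ (n\<^sup>2 + 2 * n) * (qpoch A (q\<^sup>2) n / qpoch (q\<^sup>2) (q\<^sup>2) n)" by simp
  also have "\<dots> = (\<Sum>k\<le>n. q ^ (n\<^sup>2 + 2 * n) * ((- A) ^ k * (q\<^sup>2) ^ (k choose 2)
                     / (qpoch (q\<^sup>2) (q\<^sup>2) k * qpoch (q\<^sup>2) (q\<^sup>2) (n - k))))"
    unfolding qbin_norm[OF Q] sum_distrib_left ..
  also have "\<dots> = (\<Sum>k\<le>n. T A q (k, n - k))"
  proof (rule sum.cong)
    fix k assume "k \<in> {..n}"
    then obtain m where n: "n = k + m" using le_iff_add by auto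
    have nz: "qpoch (q\<^sup>2) (q\<^sup>2) k \<noteq> 0" "qpoch (q\<^sup>2) (q\<^sup>2) m \<noteq> 0"
      using qpoch_QQ_nz[OF Q] by auto
    have "q ^ (n\<^sup>2 + 2 * n) = q ^ (k\<^sup>2 + 2 * k) * ((q\<^sup>2) ^ (m choose 2) * (q ^ (2 * k + 3)) ^ m)"
      unfolding n by (rule pw_T)
    then show "q ^ (n\<^sup>2 + 2 * n) * ((- A) ^ k * (q\<^sup>2) ^ (k choose 2)
                     / (qpoch (q\<^sup>2) (q\<^sup>2) k * qpoch (q\<^sup>2) (q\<^sup>2) (n - k))) = T A q (k, n - k)"
      unfolding T_def X_def ec_def using nz n by (simp add: field_simps)
  qed simp
  finally show ?thesis .
qed

lemma X_bound:
  assumes q: "norm q < 1"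
  shows "norm (X A q k) \<le> norm (ec (q\<^sup>2) k * (- A * q ^ 3) ^ k)"
proof -
  have e: "X A q k = (q\<^sup>2) ^ (k choose 2) * (ec (q\<^sup>2) k * (- A * q ^ 3) ^ k)"
  proof -
    have h: "(- A * q ^ 3) ^ k = (- A) ^ k * (q ^ 3) ^ k" by (rule power_mult_distrib)
    show ?thesis unfolding X_def ec_def pw_X h by (simp add: field_simps)
  qed
  have "norm ((q\<^sup>2) ^ (k choose 2)) \<le> 1"
    using q by (simp add: norm_power power_le_one)
  then show ?thesis unfolding e norm_mult
    by (intro mult_left_le_one_le) auto
qed

lemma X_summable:
  assumes q: "norm q < 1"
  shows "summable (\<lambda>k. norm (X A q k))"
  by (rule summable_comparison_test'[OF ec_summable[OF normQ[OF q]], of 0])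
     (use X_bound[OF q] in auto)

lemma T_bound:
  assumes q: "norm q < 1"
  shows "norm (T A q (k, m)) \<le> norm (X A q k) * norm (ec (q\<^sup>2) m * (q ^ 3) ^ m)"
proof -
  have "norm q ^ ((2 * k + 3) * m) \<le> norm q ^ (3 * m)"
    using q by (intro power_decreasing) auto
  then have "norm ((q ^ (2 * k + 3)) ^ m) \<le> norm ((q ^ 3) ^ m)"
    by (simp add: norm_power power_mult[symmetric])
  then show ?thesis
    unfolding T_def norm_mult by (auto intro!: mult_left_mono)
qed

lemma T_summable:
  assumes q: "norm q < 1"
  shows "T A q summable_on UNIV"
proof -
  define \<alpha> where "\<alpha> = (\<lambda>k. norm (X A q k))"
  define \<beta> where "\<beta> = (\<lambda>m. norm (ec (q\<^sup>2) m * (q ^ 3) ^ m))"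
  define g where "g = (\<lambda>(k, m). \<alpha> k * \<beta> m)"
  have sa: "summable \<alpha>" unfolding \<alpha>_def by (rule X_summable[OF q])
  have sb: "summable \<beta>" unfolding \<beta>_def by (rule ec_summable[OF normQ[OF q]])
  have hb: "(\<beta> has_sum suminf \<beta>) UNIV"
    by (rule norm_summable_imp_has_sum) (use sb in \<open>auto simp: \<beta>_def summable_sums\<close>)
  have "g summable_on Sigma UNIV (\<lambda>_. UNIV)"
  proof (rule summable_on_SigmaI[where g = "\<lambda>k. \<alpha> k * suminf \<beta>"])
    fix k :: nat
    show "((\<lambda>m. g (k, m)) has_sum \<alpha> k * suminf \<beta>) UNIV"
      unfolding g_def using has_sum_cmult_right[OF hb] by simp
  next
    have "summable (\<lambda>k. norm (\<alpha> k * suminf \<beta>))"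
      using summable_mult2[OF sa, of "suminf \<beta>"] suminf_nonneg[OF sb]
      by (simp add: \<alpha>_def \<beta>_def abs_mult)
    then show "(\<lambda>k. \<alpha> k * suminf \<beta>) summable_on UNIV"
      by (rule norm_summable_imp_summable_on)
  next
    fix k m show "0 \<le> g (k, m)" by (simp add: g_def \<alpha>_def \<beta>_def)
  qed
  then have "(\<lambda>x. norm (g x)) summable_on UNIV"
    by (simp add: g_def \<alpha>_def \<beta>_def case_prod_unfold abs_mult)
  then have "(\<lambda>x. norm (T A q x)) summable_on UNIV"
    by (rule Infinite_Sum.abs_summable_on_comparison_test)
       (use T_bound[OF q] in \<open>auto simp: g_def \<alpha>_def \<beta>_def abs_mult\<close>)
  then show ?thesis by (rule abs_summable_summable)
qed

lemma part1:
  assumes q: "norm q < 1"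
  shows "(\<lambda>n. q ^ (n\<^sup>2 + 2 * n) * qpoch A (q\<^sup>2) n / qpoch (q\<^sup>2) (q\<^sup>2) n) sums infsum (T A q) UNIV"
    and "(\<lambda>k. u A q k * qpoch_inf (- q) (q\<^sup>2)) sums infsum (T A q) UNIV"
proof -
  have Q: "norm (q\<^sup>2) < 1" using normQ[OF q] .
  define S where "S = infsum (T A q) UNIV"
  have hT: "(T A q has_sum S) UNIV" unfolding S_def using T_summable[OF q] by simp
  define g where "g = (\<lambda>(n, k). (k, n - k::nat))"
  have bij: "bij_betw g (Sigma UNIV (\<lambda>n. {..n})) UNIV"
    by (rule bij_betwI[where g = "\<lambda>(k, m). (k + m, k)"]) (auto simp: g_def)
  have hD: "((\<lambda>x. T A q (g x)) has_sum S) (Sigma UNIV (\<lambda>n. {..n}))"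
    using has_sum_reindex_bij_betw[OF bij] hT by blast
  have "((\<lambda>n. \<Sum>k\<le>n. T A q (k, n - k)) has_sum S) UNIV"
  proof (rule has_sum_SigmaD[OF hD])
    fix n :: nat
    show "((\<lambda>k. T A q (g (n, k))) has_sum (\<Sum>k\<le>n. T A q (k, n - k))) {..n}"
      by (simp add: g_def)
  qed
  then have "(\<lambda>n. \<Sum>k\<le>n. T A q (k, n - k)) sums S" by (rule has_sum_imp_sums)
  then show "(\<lambda>n. q ^ (n\<^sup>2 + 2 * n) * qpoch A (q\<^sup>2) n / qpoch (q\<^sup>2) (q\<^sup>2) n) sums infsum (T A q) UNIV"
    unfolding S_def diag[OF q] .
  have hR: "((\<lambda>m. T A q (k, m)) has_sum (X A q k * eS (q\<^sup>2) (q ^ (2 * k + 3)))) UNIV" for k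
  proof (rule norm_summable_imp_has_sum)
    show "summable (\<lambda>m. norm (T A q (k, m)))"
      unfolding T_def norm_mult fst_conv snd_conv
      by (rule summable_mult[OF ec_summable[OF Q, unfolded norm_mult]])
    show "(\<lambda>m. T A q (k, m)) sums (X A q k * eS (q\<^sup>2) (q ^ (2 * k + 3)))"
      unfolding T_def fst_conv snd_conv eS_def
      by (rule sums_mult[OF summable_sums[OF summable_norm_cancel[OF ec_summable[OF Q]]]])
  qed
  have hT': "(T A q has_sum S) (Sigma UNIV (\<lambda>_. UNIV))" using hT by simp
  have "((\<lambda>k. X A q k * eS (q\<^sup>2) (q ^ (2 * k + 3))) has_sum S) UNIV"
    by (rule has_sum_SigmaD[OF hT' hR])
  moreover have "X A q k * eS (q\<^sup>2) (q ^ (2 * k + 3)) = u A q k * qpoch_inf (- q) (q\<^sup>2)" for k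
  proof -
    have nz: "qpoch (- q) (q\<^sup>2) (Suc k) \<noteq> 0"
      using qpoch_shift_nz[OF Q, of "- q"] q by simp
    have "eS (q\<^sup>2) q = qpoch (- q) (q\<^sup>2) (Suc k) * eS (q\<^sup>2) (q * (q\<^sup>2) ^ Suc k)"
      by (rule eS_iter[OF Q])
    moreover have "q * (q\<^sup>2) ^ Suc k = q ^ (2 * k + 3)"
    proof -
      have e: "2 * k + 3 = Suc (2 * Suc k)" by simp
      show ?thesis by (simp only: e power_Suc power_mult)
    qed
    moreover have "eS (q\<^sup>2) q = qpoch_inf (- q) (q\<^sup>2)" by (rule eS_prod[OF Q])
    ultimately show ?thesis using nz unfolding u_def by (simp add: field_simps)
  qed
  ultimately have "((\<lambda>k. u A q k * qpoch_inf (- q) (q\<^sup>2)) has_sum S) UNIV" by simp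
  then show "(\<lambda>k. u A q k * qpoch_inf (- q) (q\<^sup>2)) sums infsum (T A q) UNIV"
    unfolding S_def by (rule has_sum_imp_sums)
qed

lemma odd_term:
  assumes q: "norm q < 1" and s: "s\<^sup>2 = A"
  shows "ec (- q) (2 * k + 1) * s ^ (2 * k + 1) = s * u A q k"
proof -
  have nz: "qpoch (- q) (q\<^sup>2) (Suc k) \<noteq> 0" "qpoch (q\<^sup>2) (q\<^sup>2) k \<noteq> 0"
    using qpoch_shift_nz[OF normQ[OF q], of "- q"] q qpoch_QQ_nz[OF normQ[OF q]] by auto
  have sp: "s ^ (2 * k + 1) = s * A ^ k"
    using s by (simp add: power_mult power_add)
  have "(- A) ^ k * (q\<^sup>2) ^ (k choose 2) * q ^ (k\<^sup>2 + 2 * k) = (- 1) ^ k * A ^ k * q ^ (2 * (k * k) + k)"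
    using pw_u[of q k] by (simp add: power_minus[of A k] mult.assoc)
  then show ?thesis
    unfolding ec_def u_def X_def qpoch_odd pw_t sp using nz
    by (simp add: field_simps)
qed

lemma part2:
  assumes q: "norm q < 1" and s: "s\<^sup>2 = A" and s0: "s \<noteq> 0"
  shows "(\<lambda>k. 2 * s * u A q k) sums (qpoch_inf (- s) (- q) - qpoch_inf s (- q))"
proof -
  have t: "norm (- q) < 1" using q by simp
  define h where "h = (\<lambda>n. ec (- q) n * s ^ n - ec (- q) n * (- s) ^ n)"
  have "h sums (eS (- q) s - eS (- q) (- s))"
    unfolding h_def eS_def
    by (intro sums_diff summable_sums summable_norm_cancel[OF ec_summable[OF t]])
  then have hs: "h sums (qpoch_inf (- s) (- q) - qpoch_inf s (- q))"
    using eS_prod[OF t, of s] eS_prod[OF t, of "- s"] by simp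
  have "(\<lambda>k. h (2 * k + 1)) sums (qpoch_inf (- s) (- q) - qpoch_inf s (- q))"
  proof (subst sums_mono_reindex)
    show "strict_mono (\<lambda>k::nat. 2 * k + 1)" by (rule strict_monoI) simp
    fix n assume "n \<notin> range (\<lambda>k::nat. 2 * k + 1)"
    then have "even n" by (metis oddE rangeI)
    then show "h n = 0" unfolding h_def by simp
  qed (rule hs)
  moreover have "h (2 * k + 1) = 2 * s * u A q k" for k
  proof -
    have m: "(- s) ^ (2 * k + 1) = - (s ^ (2 * k + 1))" by simp
    have "h (2 * k + 1) = 2 * (ec (- q) (2 * k + 1) * s ^ (2 * k + 1))"
      unfolding h_def m by (simp only: mult_minus_right diff_minus_eq_add mult_2)
    then show ?thesis unfolding odd_term[OF q s, of k] by simp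
  qed
  ultimately show ?thesis by simp
qed

theorem lemma3p2:
  fixes A q s :: complex
  assumes "A \<noteq> 0" and "s\<^sup>2 = A" and "norm q < 1"
  shows "G A q = 1 / (2 * s) * qpoch_inf (- q) (q\<^sup>2)
                 * (qpoch_inf (- s) (- q) - qpoch_inf s (- q))"
proof -
  have s0: "s \<noteq> 0" using assms(1,2) by auto
  define P where "P = qpoch_inf (- q) (q\<^sup>2)"
  define L where "L = qpoch_inf (- s) (- q) - qpoch_inf s (- q)"
  have "G A q = infsum (T A q) UNIV"
    unfolding G_def by (rule sums_unique[symmetric, OF part1(1)[OF assms(3)]])
  also have "\<dots> = (\<Sum>k. u A q k * P)"
    unfolding P_def by (rule sums_unique[OF part1(2)[OF assms(3)]])
  also have "\<dots> = (\<Sum>k. u A q k) * P"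
  proof -
    have "(\<lambda>k. 2 * s * u A q k) sums L" unfolding L_def by (rule part2[OF assms(3,2) s0])
    then have "(\<lambda>k. 1 / (2 * s) * (2 * s * u A q k)) sums (1 / (2 * s) * L)" by (rule sums_mult)
    then have su: "u A q sums (L / (2 * s))" using s0 by simp
    show ?thesis by (rule suminf_mult2[OF sums_summable[OF su], symmetric])
  qed
  also have "(\<Sum>k. u A q k) = L / (2 * s)"
  proof -
    have "(\<lambda>k. 2 * s * u A q k) sums L" unfolding L_def by (rule part2[OF assms(3,2) s0])
    then have "(\<lambda>k. 1 / (2 * s) * (2 * s * u A q k)) sums (1 / (2 * s) * L)" by (rule sums_mult)
    then have "u A q sums (L / (2 * s))" using s0 by simp
    then show ?thesis by (rule sums_unique[symmetric])
  qed
  finally show ?thesis unfolding P_def L_def by simp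
qed

end
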